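(* Let $(X,\mathcal{B},\mu,T)$ be a probability measure-preserving system, $f\in L^2\cap L^\infty(X,\mu)$, and $\{n_i\}_{i\ge1}\subset\mathbb{N}$ a strictly increasing sequence. Suppose there exist $\alpha>0$ and $C>0$ such that $f_0=f-\int_X f\,d\mu$ satisfies $|\langle f_0\circ T^n,f_0\rangle|\le Cn^{-\alpha}$ for all $n\ge1$. Then for $\mu$-almost every $x\in X$, $$\frac1N\sum_{i=1}^N f(T^{n_i}x)\longrightarrow\int_X f\,d\mu\quad(N\to\infty).$$
   Context: $\langle g,h\rangle=\int_X g\overline{h}\,d\mu$. *)

theory Defs
  imports "HOL-Probability.Probability"
begin

definition mp_map :: "'a measure \<Rightarrow> ('a \<Rightarrow> 'a) \<Rightarrow> bool" where
  "mp_map M T \<longleftrightarrow> T \<in> M \<rightarrow>\<^sub>M M \<and> distr M M T = M"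

definition L2_inner :: "'a measure \<Rightarrow> ('a \<Rightarrow> complex) \<Rightarrow> ('a \<Rightarrow> complex) \<Rightarrow> complex" where
  "L2_inner M g h = (\<integral>x. g x * cnj (h x) \<partial>M)"

end

theory Submission
  imports Defs
begin



lemma mp_funpow:
  assumes "mp_map M T" shows "mp_map M (T ^^ k)"
proof (induction k)
  case 0
  then show ?case by (simp add: mp_map_def id_def)
next
  case (Suc k)
  have m: "T \<in> M \<rightarrow>\<^sub>M M" "distr M M T = M" using assms by (auto simp: mp_map_def)
  have k: "T ^^ k \<in> M \<rightarrow>\<^sub>M M" "distr M M (T ^^ k) = M" using Suc by (auto simp: mp_map_def)
  have "distr M M (T \<circ> T ^^ k) = distr (distr M M (T ^^ k)) M T"
    by (rule distr_distr[symmetric]) (use m k in auto)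
  then show ?case using m k by (auto simp: mp_map_def comp_def intro: measurable_comp)
qed

lemma incr_gap:
  assumes "\<forall>i\<ge>1. n i < n (Suc i)" "1 \<le> i" "i \<le> j"
  shows "n i + (j - i) \<le> (n j :: nat)"
  using assms(3)
proof (induction j)
  case 0 then show ?case by simp
next
  case (Suc j)
  show ?case
  proof (cases "i = Suc j")
    case True then show ?thesis by simp
  next
    case False
    then have "i \<le> j" using Suc by simp
    then have "n i + (j - i) \<le> n j" using Suc by simp
    moreover have "n j < n (Suc j)" using assms(1) \<open>i\<le>j\<close> assms(2) by simp
    ultimately show ?thesis using \<open>i\<le>j\<close> by linarith
  qed
qed

lemma strict_mono_bracket:
  fixes s :: "nat \<Rightarrow> nat"
  assumes "strict_mono s" "s 0 \<le> N"
  shows "\<exists>m. s m \<le> N \<and> N < s (Suc m)"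
  using assms(2)
proof (induction N)
  case 0 then show ?case using assms(1) by (metis le_zero_eq lessI strict_monoD)
next
  case (Suc N)
  show ?case
  proof (cases "s 0 \<le> N")
    case True
    then obtain m where m: "s m \<le> N" "N < s (Suc m)" using Suc by auto
    show ?thesis
    proof (cases "Suc N < s (Suc m)")
      case True then show ?thesis using m by (intro exI[of _ m]) auto
    next
      case False
      then have "s (Suc m) = Suc N" using m by simp
      moreover have "s (Suc m) < s (Suc (Suc m))" using assms(1) by (simp add: strict_monoD)
      ultimately show ?thesis by (intro exI[of _ "Suc m"]) auto
    qed
  next
    case False
    then have "s 0 = Suc N" using Suc by simp
    moreover have "s 0 < s (Suc 0)" using assms(1) by (simp add: strict_monoD)
    ultimately show ?thesis by (intro exI[of _ 0]) auto
  qed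
qed




lemma gap_fill:
  fixes a :: "nat \<Rightarrow> complex" and q :: nat
  assumes bnd: "\<And>i. norm (a i) \<le> B"
    and lim: "(\<lambda>m. (\<Sum>i=1..Suc m ^ q. a i) / of_nat (Suc m ^ q)) \<longlonglongrightarrow> 0"
    and q: "q \<ge> 1"
  shows "(\<lambda>N. (\<Sum>i=1..N. a i) / of_nat N) \<longlonglongrightarrow> 0"
proof (rule LIMSEQ_I)
  fix r :: real assume r: "r > 0"
  define s where "s m = Suc m ^ q" for m
  have smono: "strict_mono s" unfolding s_def
    by (rule strict_monoI) (use q in \<open>auto intro: power_strict_mono\<close>)
  have spos: "s m \<ge> 1" for m unfolding s_def by simp
  have B0: "B \<ge> 0" using bnd[of 0] norm_ge_zero[of "a 0"] by linarith
  define t where "t m = real (s (Suc m)) / real (s m)" for m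
  have t_eq: "t m = (real (m+2) / real (m+1)) ^ q" for m
    unfolding t_def s_def by (simp add: power_divide)
  have "(\<lambda>m. real (m+2) / real (m+1)) \<longlonglongrightarrow> 1"
  proof -
    have "(\<lambda>m. 1 + 1 / real (Suc m)) \<longlonglongrightarrow> 1 + 0"
      by (intro tendsto_add tendsto_const) (rule LIMSEQ_Suc[OF lim_inverse_n'[unfolded inverse_eq_divide]])
    moreover have "real (m+2) / real (m+1) = 1 + 1 / real (Suc m)" for m
      by (simp add: field_simps)
    ultimately show ?thesis by simp
  qed
  then have "t \<longlonglongrightarrow> 1 ^ q" unfolding t_eq by (rule tendsto_power)
  then have t1: "t \<longlonglongrightarrow> 1" by simp
  have "(\<lambda>m. (t m - 1) * B) \<longlonglongrightarrow> (1 - 1) * B"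
    by (rule tendsto_mult[OF tendsto_diff[OF t1 tendsto_const] tendsto_const])
  then have tB: "(\<lambda>m. (t m - 1) * B) \<longlonglongrightarrow> 0" by simp
  obtain m1 where m1': "\<forall>m\<ge>m1. norm ((t m - 1) * B - 0) < r/2"
    using LIMSEQ_D[OF tB, of "r/2"] r by auto
  have m1: "norm ((t m - 1) * B) < r/2" if "m \<ge> m1" for m using m1' that by auto
  obtain m2 where m2': "\<forall>m\<ge>m2. norm ((\<Sum>i=1..Suc m ^ q. a i) / of_nat (Suc m ^ q) - 0) < r/2"
    using LIMSEQ_D[OF lim, of "r/2"] r by auto
  have m2: "norm ((\<Sum>i=1..s m. a i) / of_nat (s m)) < r/2" if "m \<ge> m2" for m
    using m2' that unfolding s_def by auto
  define m0 where "m0 = max m1 m2"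
  show "\<exists>no. \<forall>N\<ge>no. norm ((\<Sum>i=1..N. a i) / of_nat N - 0) < r"
  proof (intro exI allI impI)
    fix N assume N: "N \<ge> s m0"
    have "s 0 \<le> s m0" using smono by (simp add: strict_mono_less_eq)
    then obtain m where m: "s m \<le> N" "N < s (Suc m)"
      using strict_mono_bracket[OF smono, of N] N by auto
    have "m0 < Suc m" using N m(2) smono by (metis le_less_trans strict_mono_less)
    then have mm: "m \<ge> m1" "m \<ge> m2" unfolding m0_def by auto
    have sub: "{1..s m} \<subseteq> {1..N}" using m by auto
    have split: "(\<Sum>i=1..N. a i) = (\<Sum>i=1..s m. a i) + (\<Sum>i\<in>{1..N} - {1..s m}. a i)"
      using sum_diff[OF _ sub, of a] by simp
    have "norm (\<Sum>i\<in>{1..N} - {1..s m}. a i) \<le> (\<Sum>i\<in>{1..N} - {1..s m}. B)"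
      by (intro sum_norm_le bnd)
    also have "\<dots> = real (N - s m) * B"
      using card_Diff_subset[OF _ sub] by simp
    also have "\<dots> \<le> real (s (Suc m) - s m) * B"
      using m B0 by (intro mult_right_mono) auto
    finally have tail: "norm (\<Sum>i\<in>{1..N} - {1..s m}. a i) \<le> real (s (Suc m) - s m) * B" .
    have Npos: "real N \<ge> real (s m)" "real (s m) > 0" using m spos[of m] by auto
    have "norm ((\<Sum>i=1..N. a i) / of_nat N) = norm (\<Sum>i=1..N. a i) / real N"
      by (simp add: norm_divide)
    also have "\<dots> \<le> (norm (\<Sum>i=1..s m. a i) + real (s (Suc m) - s m) * B) / real N"
      unfolding split using Npos
      by (intro divide_right_mono order_trans[OF norm_triangle_ineq] add_left_mono tail) auto
    also have "\<dots> \<le> (norm (\<Sum>i=1..s m. a i) + real (s (Suc m) - s m) * B) / real (s m)"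
      using Npos B0 by (intro divide_left_mono) auto
    also have "\<dots> = norm ((\<Sum>i=1..s m. a i) / of_nat (s m)) + (t m - 1) * B"
    proof -
      have le: "s m \<le> s (Suc m)" using smono by (simp add: strict_mono_less_eq)
      have d: "real (s (Suc m) - s m) = real (s (Suc m)) - real (s m)" using le by (simp add: of_nat_diff)
      have "(t m - 1) * B = real (s (Suc m) - s m) * B / real (s m)"
        unfolding t_def d using Npos(2) by (simp add: field_simps)
      then show ?thesis using Npos(2) by (simp add: norm_divide add_divide_distrib)
    qed
    also have "\<dots> < r/2 + r/2"
      using m1[OF mm(1)] m2[OF mm(2)] by (intro add_strict_mono) auto
    finally show "norm ((\<Sum>i=1..N. a i) / of_nat N - 0) < r" by simp
  qed
qed




lemma borel_measurable_cnj'[measurable (raw)]: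
  assumes g: "g \<in> borel_measurable M"
  shows "(\<lambda>x. cnj (g x :: complex)) \<in> borel_measurable M"
  by (rule borel_measurable_continuous_on[OF _ g]) (intro continuous_intros)

lemma row_count:
  fixes i M N :: nat
  shows "card {j\<in>{1..N}. i < j + M \<and> j < i + M} \<le> 2 * M"
proof -
  have "{j\<in>{1..N}. i < j + M \<and> j < i + M} \<subseteq> {i + 1 - M ..< i + M}" by auto
  then have "card {j\<in>{1..N}. i < j + M \<and> j < i + M} \<le> card {i + 1 - M ..< i + M}"
    by (intro card_mono) auto
  also have "\<dots> \<le> 2 * M" by simp
  finally show ?thesis .
qed

lemma double_sum_bound:
  fixes \<phi> :: "nat \<Rightarrow> nat \<Rightarrow> real"
  assumes "\<And>i j. \<phi> i j \<le> (if i < j + M \<and> j < i + M then B2 else 0) + D" "B2 \<ge> 0"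
  shows "(\<Sum>i=1..N. \<Sum>j=1..N. \<phi> i j) \<le> real N * (2 * real M * B2 + real N * D)"
proof -
  have row: "(\<Sum>j=1..N. \<phi> i j) \<le> 2 * real M * B2 + real N * D" for i
  proof -
    have "(\<Sum>j=1..N. \<phi> i j) \<le> (\<Sum>j=1..N. (if i < j + M \<and> j < i + M then B2 else 0) + D)"
      by (intro sum_mono assms(1))
    also have "\<dots> = (\<Sum>j=1..N. (if i < j + M \<and> j < i + M then B2 else 0)) + real N * D"
      by (simp add: sum.distrib)
    also have "(\<Sum>j=1..N. (if i < j + M \<and> j < i + M then B2 else 0))
       = real (card {j\<in>{1..N}. i < j + M \<and> j < i + M}) * B2"
      by (simp add: sum.If_cases Int_def)
    also have "\<dots> \<le> real (2 * M) * B2"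
      using row_count[of N i M] assms(2) by (intro mult_right_mono) auto
    finally show ?thesis by simp
  qed
  have "(\<Sum>i=1..N. \<Sum>j=1..N. \<phi> i j) \<le> (\<Sum>i=1..N. 2 * real M * B2 + real N * D)"
    by (intro sum_mono row)
  also have "\<dots> = real N * (2 * real M * B2 + real N * D)" by simp
  finally show ?thesis .
qed




theorem mainTheorem5:
  fixes M :: "'a measure" and T :: "'a \<Rightarrow> 'a" and f :: "'a \<Rightarrow> complex"
    and n :: "nat \<Rightarrow> nat" and \<alpha> C :: real
  assumes "prob_space M"
    and "mp_map M T"
    and "f \<in> borel_measurable M"
    and "integrable M (\<lambda>x. (norm (f x))\<^sup>2)"
    and "\<exists>B. AE x in M. norm (f x) \<le> B"
    and "\<forall>i\<ge>1. n i < n (Suc i)"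
    and "\<alpha> > 0" and "C > 0"
    and "\<forall>k::nat\<ge>1. norm (L2_inner M (\<lambda>x. f ((T ^^ k) x) - (\<integral>y. f y \<partial>M))
                                    (\<lambda>x. f x - (\<integral>y. f y \<partial>M))) \<le> C * real k powr (-\<alpha>)"
  shows "AE x in M. (\<lambda>N. (\<Sum>i=1..N. f ((T ^^ n i) x)) / of_nat N) \<longlonglongrightarrow> (\<integral>y. f y \<partial>M)"
proof -
  interpret prob_space M by fact
  note fm[measurable] = assms(3)
  define c where "c = (\<integral>y. f y \<partial>M)"
  define g where "g x = f x - c" for x
  define h where "h k x = g ((T ^^ k) x)" for k x
  obtain B where B: "AE x in M. norm (f x) \<le> B" using assms(5) by auto
  define B' where "B' = B + norm c"
  have Tk[measurable]: "T ^^ k \<in> M \<rightarrow>\<^sub>M M" and Tkd: "distr M M (T ^^ k) = M" for k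
    using mp_funpow[OF assms(2), of k] by (auto simp: mp_map_def)
  have gm[measurable]: "g \<in> borel_measurable M" unfolding g_def by measurable
  have hm[measurable]: "h k \<in> borel_measurable M" for k
    unfolding h_def by (rule measurable_compose[OF Tk gm])
  have hB: "AE x in M. norm (h k x) \<le> B'" for k
  proof -
    have "AE x in distr M M (T ^^ k). norm (f x) \<le> B" unfolding Tkd by (rule B)
    then have "AE x in M. norm (f ((T ^^ k) x)) \<le> B" by (rule AE_distrD[OF Tk])
    then show ?thesis unfolding h_def g_def B'_def
      by eventually_elim (use norm_triangle_ineq4 in \<open>smt (verit)\<close>)
  qed
  have hBall: "AE x in M. \<forall>k. norm (h k x) \<le> B'" using hB by (simp add: AE_all_countable)
  have B'0: "B' \<ge> 0"
  proof -
    have "AE x in M. 0 \<le> B'" using hB[of 0] by eventually_elim (use norm_ge_zero in \<open>smt (verit)\<close>)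
    then show ?thesis by simp
  qed
  have prodB: "AE x in M. norm (h a x * cnj (h b x)) \<le> B'\<^sup>2" for a b
    using hB[of a] hB[of b] apply eventually_elim
    using B'0 by (simp add: norm_mult power2_eq_square mult_mono)
  have prodI: "integrable M (\<lambda>x. h a x * cnj (h b x))" for a b
    by (rule integrable_const_bound[OF prodB]) measurable
  have corr_diag: "norm (\<integral>x. h a x * cnj (h b x) \<partial>M) \<le> B'\<^sup>2" for a b
  proof -
    have "norm (\<integral>x. h a x * cnj (h b x) \<partial>M) \<le> (\<integral>x. norm (h a x * cnj (h b x)) \<partial>M)"
      by (rule integral_norm_bound)
    also have "\<dots> \<le> (\<integral>x. B'\<^sup>2 \<partial>M)"
      by (intro integral_mono_AE prodB) (auto intro: prodI)
    finally show ?thesis by (simp add: prob_space)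
  qed
  have shift: "(\<integral>x. h b x * cnj (h a x) \<partial>M) = L2_inner M (h (b - a)) g" if "a \<le> b" for a b
  proof -
    have eq: "h b x * cnj (h a x) = (\<lambda>y. h (b - a) y * cnj (g y)) ((T ^^ a) x)" for x
    proof -
      have "b = (b - a) + a" using that by simp
      then have "(T ^^ b) x = (T ^^ (b - a)) ((T ^^ a) x)" by (metis funpow_add comp_apply)
      then show ?thesis unfolding h_def by simp
    qed
    have "(\<integral>x. h b x * cnj (h a x) \<partial>M) = (\<integral>x. (\<lambda>y. h (b - a) y * cnj (g y)) ((T ^^ a) x) \<partial>M)"
      unfolding eq ..
    also have "\<dots> = (\<integral>y. h (b - a) y * cnj (g y) \<partial>distr M M (T ^^ a))"
      by (rule integral_distr[symmetric]) measurable
    also have "\<dots> = L2_inner M (h (b - a)) g" unfolding Tkd L2_inner_def ..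
    finally show ?thesis .
  qed
  have corr_k: "norm (L2_inner M (h k) g) \<le> C * real k powr (-\<alpha>)" if "k \<ge> 1" for k
    using assms(9) that unfolding h_def g_def c_def by auto
  have corr_far: "norm (\<integral>x. h (n i) x * cnj (h (n j) x) \<partial>M) \<le> C * real K powr (-\<alpha>)"
    if ij: "1 \<le> i" "1 \<le> j" and K: "K \<ge> 1" and far: "\<not> (i < j + K \<and> j < i + K)" for i j K
  proof -
    have key: "norm (\<integral>x. h (n b) x * cnj (h (n a) x) \<partial>M) \<le> C * real K powr (-\<alpha>)"
      if ab: "1 \<le> a" "a + K \<le> b" for a b
    proof -
      have "n a + (b - a) \<le> n b" using incr_gap[OF assms(6), of a b] ab by simp
      then have d: "K \<le> n b - n a" "n a \<le> n b" using ab by auto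
      have "norm (\<integral>x. h (n b) x * cnj (h (n a) x) \<partial>M) = norm (L2_inner M (h (n b - n a)) g)"
        using shift[OF d(2)] by simp
      also have "\<dots> \<le> C * real (n b - n a) powr (-\<alpha>)" using corr_k[of "n b - n a"] d K by linarith
      also have "\<dots> \<le> C * real K powr (-\<alpha>)"
        using d K assms(7,8) by (intro mult_left_mono powr_mono2') auto
      finally show ?thesis .
    qed
    show ?thesis
    proof (cases "j + K \<le> i")
      case True then show ?thesis using key[of j i] ij by simp
    next
      case False
      then have "i + K \<le> j" using far by auto
      have "(\<integral>x. h (n i) x * cnj (h (n j) x) \<partial>M) = cnj (\<integral>x. h (n j) x * cnj (h (n i) x) \<partial>M)"
        by (subst Bochner_Integration.integral_cnj[symmetric]) (simp add: mult.commute)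
      then show ?thesis using key[of i j] ij \<open>i + K \<le> j\<close> by simp
    qed
  qed
  define S where "S N x = (\<Sum>i=1..N. h (n i) x)" for N x
  have Sm[measurable]: "S N \<in> borel_measurable M" for N unfolding S_def by measurable
  have SB: "AE x in M. norm (S N x) \<le> real N * B'" for N
    using hBall
  proof eventually_elim
    case (elim x)
    have "norm (S N x) \<le> (\<Sum>i=1..N. norm (h (n i) x))" unfolding S_def by (rule norm_sum)
    also have "\<dots> \<le> (\<Sum>i=1..N. B')" using elim by (intro sum_mono) auto
    finally show ?case by simp
  qed
  have S2I: "integrable M (\<lambda>x. (norm (S N x))\<^sup>2)" for N
  proof (rule integrable_const_bound[where B="(real N * B')\<^sup>2"])
    show "AE x in M. norm ((norm (S N x))\<^sup>2) \<le> (real N * B')\<^sup>2"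
      using SB[of N] by eventually_elim (simp add: power_mono)
  qed measurable
  have mom: "(\<integral>x. (norm (S N x))\<^sup>2 \<partial>M) \<le> (\<Sum>i=1..N. \<Sum>j=1..N. norm (\<integral>x. h (n i) x * cnj (h (n j) x) \<partial>M))" for N
  proof -
    have "complex_of_real (\<integral>x. (norm (S N x))\<^sup>2 \<partial>M) = (\<integral>x. complex_of_real ((norm (S N x))\<^sup>2) \<partial>M)"
      by (rule integral_complex_of_real[symmetric])
    also have "\<dots> = (\<integral>x. S N x * cnj (S N x) \<partial>M)" by (simp only: complex_norm_square)
    also have "\<dots> = (\<integral>x. (\<Sum>i=1..N. \<Sum>j=1..N. h (n i) x * cnj (h (n j) x)) \<partial>M)"
      unfolding S_def by (simp add: sum_product)
    also have "\<dots> = (\<Sum>i=1..N. \<Sum>j=1..N. (\<integral>x. h (n i) x * cnj (h (n j) x) \<partial>M))"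
      by (simp add: prodI)
    finally have eq: "complex_of_real (\<integral>x. (norm (S N x))\<^sup>2 \<partial>M) = (\<Sum>i=1..N. \<Sum>j=1..N. (\<integral>x. h (n i) x * cnj (h (n j) x) \<partial>M))" .
    have "(\<integral>x. (norm (S N x))\<^sup>2 \<partial>M) = norm (complex_of_real (\<integral>x. (norm (S N x))\<^sup>2 \<partial>M))"
      by simp
    also have "\<dots> \<le> (\<Sum>i=1..N. norm (\<Sum>j=1..N. (\<integral>x. h (n i) x * cnj (h (n j) x) \<partial>M)))"
      unfolding eq by (rule norm_sum)
    also have "\<dots> \<le> (\<Sum>i=1..N. \<Sum>j=1..N. norm (\<integral>x. h (n i) x * cnj (h (n j) x) \<partial>M))"
      by (intro sum_mono norm_sum)
    finally show ?thesis .
  qed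
  have mom2: "(\<integral>x. (norm (S N x))\<^sup>2 \<partial>M) \<le> real N * (2 * real K * B'\<^sup>2 + real N * (C * real K powr (-\<alpha>)))"
    if K: "K \<ge> 1" for N K
  proof -
    have "(\<Sum>i=1..N. \<Sum>j=1..N. norm (\<integral>x. h (n i) x * cnj (h (n j) x) \<partial>M))
        = (\<Sum>i=1..N. \<Sum>j=1..N. (\<lambda>i j. if i \<ge> 1 \<and> j \<ge> 1 then norm (\<integral>x. h (n i) x * cnj (h (n j) x) \<partial>M) else 0) i j)"
      by (intro sum.cong refl) auto
    also have "\<dots> \<le> real N * (2 * real K * B'\<^sup>2 + real N * (C * real K powr (-\<alpha>)))"
    proof (rule double_sum_bound)
      fix i j
      have D0: "0 \<le> C * real K powr (-\<alpha>)" using assms(8) by simp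
      show "(if i \<ge> 1 \<and> j \<ge> 1 then norm (\<integral>x. h (n i) x * cnj (h (n j) x) \<partial>M) else 0)
          \<le> (if i < j + K \<and> j < i + K then B'\<^sup>2 else 0) + C * real K powr (-\<alpha>)"
        using corr_diag[of "n i" "n j"] corr_far[of i j K] K D0 by auto
    qed simp
    finally show ?thesis using mom[of N] by linarith
  qed
  obtain r :: nat where r: "1 < real r * \<alpha>" using ex_less_of_nat_mult[OF assms(7), of 1] by auto
  define q where "q = r + 2"
  define Y where "Y m x = S (Suc m ^ q) x / of_nat (Suc m ^ q)" for m x
  have Ym[measurable]: "Y m \<in> borel_measurable M" for m unfolding Y_def by measurable
  define b where "b m = 2 * B'\<^sup>2 * real (Suc m) powr (-2) + C * real (Suc m) powr (-(real r * \<alpha>))" for m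
  have Y2: "(norm (Y m x))\<^sup>2 = (norm (S (Suc m ^ q) x))\<^sup>2 / (real (Suc m ^ q))\<^sup>2" for m x
    unfolding Y_def norm_divide norm_of_nat by (simp add: power_divide)
  have YI: "integrable M (\<lambda>x. (norm (Y m x))\<^sup>2)" for m
    unfolding Y2 by (intro integrable_divide_zero S2I)
  have EY: "(\<integral>x. (norm (Y m x))\<^sup>2 \<partial>M) \<le> b m" for m
  proof -
    define x :: real where "x = real (Suc m)"
    have x0: "x > 0" unfolding x_def by simp
    have N: "real (Suc m ^ q) = x ^ r * x\<^sup>2" unfolding x_def q_def by (simp only: power_add of_nat_mult of_nat_power)
    have K: "real (Suc m ^ r) = x ^ r" unfolding x_def by simp
    have xr0: "x ^ r > 0" using x0 by simp
    have Kp: "(x ^ r) powr (-\<alpha>) = x powr (-(real r * \<alpha>))"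
      using x0 by (simp add: powr_realpow[symmetric] powr_powr)
    have x2: "x powr (-2) = 1 / x\<^sup>2"
      using x0 by (simp add: powr_minus powr_realpow[of x 2, simplified] divide_inverse)
    have "(\<integral>x. (norm (Y m x))\<^sup>2 \<partial>M) = (\<integral>x. (norm (S (Suc m ^ q) x))\<^sup>2 \<partial>M) / (real (Suc m ^ q))\<^sup>2"
      unfolding Y2 by simp
    also have "\<dots> \<le> real (Suc m ^ q) * (2 * real (Suc m ^ r) * B'\<^sup>2 + real (Suc m ^ q) * (C * real (Suc m ^ r) powr (-\<alpha>))) / (real (Suc m ^ q))\<^sup>2"
      by (intro divide_right_mono mom2) auto
    also have "\<dots> = b m"
      unfolding b_def N K Kp x2 x_def[symmetric] using x0 by (simp add: field_simps power2_eq_square)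
    finally show ?thesis .
  qed
  have sumpow: "summable (\<lambda>m. real (Suc m) powr s)" if "s < -1" for s
  proof -
    have "summable (\<lambda>m. real m powr s)" using that by (simp add: summable_real_powr_iff)
    then have "summable (\<lambda>m. real (m + 1) powr s)" by (subst summable_iff_shift)
    then show ?thesis by simp
  qed
  have bsum: "summable b" unfolding b_def
    using r by (intro summable_add summable_mult sumpow) auto
  have Esum: "summable (\<lambda>m. (\<integral>x. (norm (Y m x))\<^sup>2 \<partial>M))"
    by (rule summable_comparison_test'[OF bsum, of 0]) (use EY in auto)
  have nn: "0 \<le> (\<integral>x. (norm (Y m x))\<^sup>2 \<partial>M)" for m by (rule integral_nonneg_AE) simp
  have meas: "(\<lambda>x. \<Sum>m. ennreal ((norm (Y m x))\<^sup>2)) \<in> borel_measurable M" by measurable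
  have "(\<integral>\<^sup>+x. (\<Sum>m. ennreal ((norm (Y m x))\<^sup>2)) \<partial>M) = (\<Sum>m. \<integral>\<^sup>+x. ennreal ((norm (Y m x))\<^sup>2) \<partial>M)"
    by (rule nn_integral_suminf) simp
  also have "\<dots> = (\<Sum>m. ennreal (\<integral>x. (norm (Y m x))\<^sup>2 \<partial>M))"
  proof (rule suminf_cong)
    fix m show "(\<integral>\<^sup>+x. ennreal ((norm (Y m x))\<^sup>2) \<partial>M) = ennreal (\<integral>x. (norm (Y m x))\<^sup>2 \<partial>M)"
      by (rule nn_integral_eq_integral[OF YI]) simp
  qed
  finally have I: "(\<integral>\<^sup>+x. (\<Sum>m. ennreal ((norm (Y m x))\<^sup>2)) \<partial>M) \<noteq> top"
    using ennreal_suminf_neq_top[OF Esum nn] by simp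
  have "AE x in M. (\<Sum>m. ennreal ((norm (Y m x))\<^sup>2)) \<noteq> \<infinity>"
    by (rule nn_integral_PInf_AE[OF meas]) (use I in simp)
  then have AEY: "AE x in M. (\<lambda>m. Y m x) \<longlonglongrightarrow> 0"
  proof eventually_elim
    case (elim x)
    have "summable (\<lambda>m. (norm (Y m x))\<^sup>2)"
      by (rule summable_suminf_not_top) (use elim in simp_all)
    then have "(\<lambda>m. (norm (Y m x))\<^sup>2) \<longlonglongrightarrow> 0" by (rule summable_LIMSEQ_zero)
    then have "(\<lambda>m. sqrt ((norm (Y m x))\<^sup>2)) \<longlonglongrightarrow> sqrt 0" by (rule tendsto_real_sqrt)
    then have "(\<lambda>m. norm (Y m x)) \<longlonglongrightarrow> 0" by simp
    then show ?case by (simp add: tendsto_norm_zero_iff)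
  qed
  show ?thesis
    using AEY hBall
  proof eventually_elim
    case (elim x)
    have "(\<lambda>N. (\<Sum>i=1..N. h (n i) x) / of_nat N) \<longlonglongrightarrow> 0"
      by (rule gap_fill[where B=B' and q=q]) (use elim in \<open>auto simp: Y_def S_def q_def\<close>)
    then have lim: "(\<lambda>N. (\<Sum>i=1..N. h (n i) x) / of_nat N + c) \<longlonglongrightarrow> 0 + c"
      by (intro tendsto_add tendsto_const)
    have ev: "eventually (\<lambda>N. (\<Sum>i=1..N. h (n i) x) / of_nat N + c = (\<Sum>i=1..N. f ((T ^^ n i) x)) / of_nat N) sequentially"
      unfolding eventually_sequentially
    proof (intro exI[of _ 1] allI impI)
      fix N :: nat assume "N \<ge> 1"
      have "(\<Sum>i=1..N. h (n i) x) = (\<Sum>i=1..N. f ((T ^^ n i) x)) - of_nat N * c"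
        unfolding h_def g_def by (simp add: sum_subtractf)
      then show "(\<Sum>i=1..N. h (n i) x) / of_nat N + c = (\<Sum>i=1..N. f ((T ^^ n i) x)) / of_nat N"
        using \<open>N \<ge> 1\<close> by (simp add: field_simps)
    qed
    show ?case using lim tendsto_cong[OF ev] unfolding c_def by simp
  qed
qed


end
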